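(* Let $A$ be a finite set of options containing a default option $0$, let $v$ be a Llull matrix on $A$ with path scores $v^*$, and let $D(z)$ be as in the context. Let $x,y\in A$ be distinct. If $D(x)\ge0$ and $D(x)>D(y)$, then $D(x)\ge v^*_{yx}-v^*_{xy}$. If moreover $D(x)>0$, then $D(x)>v^*_{yx}-v^*_{xy}$.
   Context: A Llull matrix on $A$ is a family of real numbers $v_{xy}\in[0,1]$, indexed by ordered pairs $(x,y)$ of distinct elements of $A$, with $v_{xy}+v_{yx}\le1$. Path scores: $v^*_{xy}=\max\min(v_{x_0x_1},\dots,v_{x_{m-1}x_m})$ over all paths $x_0\dots x_m$ ($m\ge1$, $x_0=x$, $x_m=y$, $x_i$ pairwise distinct). For $z\in A$, $D(z)=v^*_{z0}-v^*_{0z}$ if $z\ne0$ and $D(0)=0$. *)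

theory Defs
  imports Complex_Main
begin

definition llull_matrix :: "'a set \<Rightarrow> ('a \<Rightarrow> 'a \<Rightarrow> real) \<Rightarrow> bool" where
  "llull_matrix A v \<longleftrightarrow>
     (\<forall>x\<in>A. \<forall>y\<in>A. x \<noteq> y \<longrightarrow> 0 \<le> v x y \<and> v x y \<le> 1 \<and> v x y + v y x \<le> 1)"

definition llull_path :: "'a set \<Rightarrow> 'a \<Rightarrow> 'a \<Rightarrow> 'a list \<Rightarrow> bool" where
  "llull_path A x y p \<longleftrightarrow>
     2 \<le> length p \<and> hd p = x \<and> last p = y \<and> distinct p \<and> set p \<subseteq> A"

definition path_score :: "('a \<Rightarrow> 'a \<Rightarrow> real) \<Rightarrow> 'a list \<Rightarrow> real" where
  "path_score v p = Min ((\<lambda>(a, b). v a b) ` set (zip p (tl p)))"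

definition vstar :: "'a set \<Rightarrow> ('a \<Rightarrow> 'a \<Rightarrow> real) \<Rightarrow> 'a \<Rightarrow> 'a \<Rightarrow> real" where
  "vstar A v x y = Max (path_score v ` {p. llull_path A x y p})"

text \<open>D(z) = v*_{z0} - v*_{0z} for z distinct from the default option 0 (here d0), D(0) = 0.\<close>
definition Dfun :: "'a set \<Rightarrow> ('a \<Rightarrow> 'a \<Rightarrow> real) \<Rightarrow> 'a \<Rightarrow> 'a \<Rightarrow> real" where
  "Dfun A v d0 z = (if z = d0 then 0 else vstar A v z d0 - vstar A v d0 z)"

end

theory Submission
  imports Defs
begin

lemma alg: fixes a b c d p q :: real
  assumes "min q a \<le> c" "min p c \<le> a" "min d q \<le> b" "min b p \<le> d" "min a d \<le> p" "min c b \<le> q"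
  "a - b \<ge> 0" "a - b > c - d"
  shows "a - b \<ge> q - p \<and> (a - b > 0 \<longrightarrow> a - b > q - p)"
  using assms by (auto simp: min_def split: if_splits)

fun lk :: "'a list \<Rightarrow> ('a \<times> 'a) set" where
  "lk (a # b # r) = insert (a, b) (lk (b # r))"
| "lk _ = {}"

lemma lk_zip: "set (zip p (tl p)) = lk p"
  by (induction p rule: lk.induct) auto

lemma lk_app: "lk (xs @ u # r) = lk (xs @ [u]) \<union> lk (u # r)"
proof (induction xs)
  case Nil then show ?case by simp
next
  case (Cons a xs) then show ?case by (cases xs) auto
qed

lemma lk_finite: "finite (lk p)"
  by (induction p rule: lk.induct) auto

lemma lk_ne: "2 \<le> length p \<Longrightarrow> lk p \<noteq> {}"
  by (cases p rule: lk.cases) auto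

lemma reduce:
  "w \<noteq> [] \<Longrightarrow> \<exists>p. distinct p \<and> p \<noteq> [] \<and> hd p = hd w \<and> last p = last w \<and> set p \<subseteq> set w \<and> lk p \<subseteq> lk w"
proof (induction "length w" arbitrary: w rule: less_induct)
  case less
  show ?case
  proof (cases "distinct w")
    case True then show ?thesis using less.prems by blast
  next
    case False
    then obtain xs ys zs u where w: "w = xs @ [u] @ ys @ [u] @ zs"
      using not_distinct_decomp by blast
    define w' where "w' = xs @ [u] @ zs"
    have "length w' < length w" using w w'_def by simp
    moreover have "w' \<noteq> []" using w'_def by simp
    ultimately obtain p where p: "distinct p \<and> p \<noteq> [] \<and> hd p = hd w' \<and> last p = last w' \<and> set p \<subseteq> set w' \<and> lk p \<subseteq> lk w'"
      using less.hyps by blast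
    have "hd w' = hd w" using w w'_def by (cases xs) auto
    moreover have "last w' = last w" using w w'_def by (cases zs rule: rev_cases) auto
    moreover have "set w' \<subseteq> set w" using w w'_def by auto
    moreover have "lk w' \<subseteq> lk w"
    proof -
      have "lk w' = lk (xs @ [u]) \<union> lk (u # zs)" using w'_def lk_app[of xs u zs] by simp
      moreover have "lk w = lk (xs @ [u]) \<union> lk (u # ys @ u # zs)" using w lk_app[of xs u "ys @ u # zs"] by simp
      moreover have "lk (u # ys @ u # zs) = lk ((u # ys) @ [u]) \<union> lk (u # zs)"
        using lk_app[of "u # ys" u zs] by simp
      ultimately show ?thesis by blast
    qed
    ultimately show ?thesis using p by (intro exI[of _ p]) auto
  qed
qed

lemma paths_finite:
  assumes "finite A"
  shows "finite {p. llull_path A a c p}"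
proof -
  have "{p. llull_path A a c p} \<subseteq> {xs. set xs \<subseteq> A \<and> length xs \<le> card A}"
  proof
    fix p assume "p \<in> {p. llull_path A a c p}"
    then have d: "distinct p" and s: "set p \<subseteq> A" unfolding llull_path_def by auto
    have "length p = card (set p)" using distinct_card[OF d] by simp
    also have "\<dots> \<le> card A" using card_mono[OF assms s] .
    finally show "p \<in> {xs. set xs \<subseteq> A \<and> length xs \<le> card A}" using s by simp
  qed
  then show ?thesis using finite_lists_length_le[OF assms] finite_subset by blast
qed

lemma vstar_ge:
  assumes "finite A" "llull_path A a c p"
  shows "path_score v p \<le> vstar A v a c"
  unfolding vstar_def using paths_finite[OF assms(1)] assms(2) by (intro Max_ge) auto

lemma vstar_attained:
  assumes "finite A" "a \<in> A" "c \<in> A" "a \<noteq> c"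
  shows "\<exists>p. llull_path A a c p \<and> path_score v p = vstar A v a c"
proof -
  have "llull_path A a c [a, c]" using assms unfolding llull_path_def by auto
  then have "path_score v ` {p. llull_path A a c p} \<noteq> {}" by blast
  then have "vstar A v a c \<in> path_score v ` {p. llull_path A a c p}"
    unfolding vstar_def using paths_finite[OF assms(1)] by (intro Max_in) auto
  then show ?thesis by auto
qed

lemma score_links:
  assumes "llull_path A a c p" "(s, t) \<in> lk p"
  shows "path_score v p \<le> v s t"
  unfolding path_score_def lk_zip using assms lk_finite
  by (intro Min_le) (auto intro: rev_image_eqI)

lemma score_ge:
  assumes "llull_path A a c p" "\<And>s t. (s, t) \<in> lk p \<Longrightarrow> m \<le> v s t"
  shows "m \<le> path_score v p"
proof -
  have f: "finite ((\<lambda>(a,b). v a b) ` lk p)" using lk_finite[of p] by (rule finite_imageI)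
  show ?thesis
  unfolding path_score_def lk_zip using assms f lk_ne[of p]
  unfolding llull_path_def by (subst Min_ge_iff) auto
qed

lemma vstar_trans:
  assumes "finite A" "a \<in> A" "b \<in> A" "c \<in> A" "a \<noteq> b" "b \<noteq> c" "a \<noteq> c"
  shows "min (vstar A v a b) (vstar A v b c) \<le> vstar A v a c"
proof -
  obtain p1 where p1: "llull_path A a b p1" "path_score v p1 = vstar A v a b"
    using vstar_attained assms by metis
  obtain p2 where p2: "llull_path A b c p2" "path_score v p2 = vstar A v b c"
    using vstar_attained assms by metis
  obtain xs where xs: "p1 = xs @ [b]" using p1(1) unfolding llull_path_def
    by (metis append_butlast_last_id list.size(3) not_numeral_le_zero)
  obtain r where r: "p2 = b # r" using p2(1) unfolding llull_path_def
    by (metis list.collapse list.size(3) not_numeral_le_zero)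
  define w where "w = xs @ b # r"
  have lkw: "lk w = lk p1 \<union> lk p2" using w_def xs r lk_app by simp
  have hw: "hd w = a" using p1(1) xs w_def unfolding llull_path_def by (cases xs) auto
  have lw: "last w = c" using p2(1) r w_def unfolding llull_path_def by (cases r) auto
  have sw: "set w \<subseteq> A" using p1(1) p2(1) xs r w_def unfolding llull_path_def by auto
  obtain p where p: "distinct p" "p \<noteq> []" "hd p = a" "last p = c" "set p \<subseteq> set w" "lk p \<subseteq> lk w"
    using reduce[of w] hw lw w_def by auto
  have "length p \<noteq> 1" using p assms(7) by (cases p) auto
  moreover have "length p > 0" using p(2) by simp
  ultimately have "2 \<le> length p" by linarith
  then have pp: "llull_path A a c p" using p sw unfolding llull_path_def by auto
  have "min (vstar A v a b) (vstar A v b c) \<le> path_score v p"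
  proof (rule score_ge[OF pp])
    fix s t assume "(s, t) \<in> lk p"
    then have "(s, t) \<in> lk p1 \<or> (s, t) \<in> lk p2" using p(6) lkw by blast
    then show "min (vstar A v a b) (vstar A v b c) \<le> v s t"
      using score_links[OF p1(1)] score_links[OF p2(1)] p1(2) p2(2)
      by (metis min.coboundedI1 min.coboundedI2)
  qed
  also have "\<dots> \<le> vstar A v a c" using vstar_ge[OF assms(1) pp] .
  finally show ?thesis .
qed

theorem theorem3p5:
  fixes A :: "'a set" and v :: "'a \<Rightarrow> 'a \<Rightarrow> real" and d0 x y :: 'a
  assumes "finite A" and "d0 \<in> A" and "llull_matrix A v"
    and "x \<in> A" and "y \<in> A" and "x \<noteq> y"
    and "Dfun A v d0 x \<ge> 0" and "Dfun A v d0 x > Dfun A v d0 y"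
  shows "Dfun A v d0 x \<ge> vstar A v y x - vstar A v x y
         \<and> (Dfun A v d0 x > 0 \<longrightarrow> Dfun A v d0 x > vstar A v y x - vstar A v x y)"
proof (cases "x = d0")
  case True
  have "y \<noteq> d0" using True assms(6) by simp
  then have "vstar A v y d0 - vstar A v d0 y < 0" using assms(8) True unfolding Dfun_def by simp
  then show ?thesis using True unfolding Dfun_def by simp
next
  case xn: False
  show ?thesis
  proof (cases "y = d0")
    case True
    have "vstar A v x d0 - vstar A v d0 x > 0" using assms(8) True xn unfolding Dfun_def by simp
    then show ?thesis using True xn unfolding Dfun_def by simp
  next
    case yn: False
    have "min (vstar A v y x) (vstar A v x d0) \<le> vstar A v y d0" by (rule vstar_trans) (use assms xn yn in auto)
    moreover have "min (vstar A v x y) (vstar A v y d0) \<le> vstar A v x d0" by (rule vstar_trans) (use assms xn yn in auto)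
    moreover have "min (vstar A v d0 y) (vstar A v y x) \<le> vstar A v d0 x" by (rule vstar_trans) (use assms xn yn in auto)
    moreover have "min (vstar A v d0 x) (vstar A v x y) \<le> vstar A v d0 y" by (rule vstar_trans) (use assms xn yn in auto)
    moreover have "min (vstar A v x d0) (vstar A v d0 y) \<le> vstar A v x y" by (rule vstar_trans) (use assms xn yn in auto)
    moreover have "min (vstar A v y d0) (vstar A v d0 x) \<le> vstar A v y x" by (rule vstar_trans) (use assms xn yn in auto)
    moreover have "0 \<le> vstar A v x d0 - vstar A v d0 x" using assms(7) xn unfolding Dfun_def by simp
    moreover have "vstar A v x d0 - vstar A v d0 x > vstar A v y d0 - vstar A v d0 y"
      using assms(8) xn yn unfolding Dfun_def by simp
    ultimately have "vstar A v x d0 - vstar A v d0 x \<ge> vstar A v y x - vstar A v x y \<and>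
       (vstar A v x d0 - vstar A v d0 x > 0 \<longrightarrow> vstar A v x d0 - vstar A v d0 x > vstar A v y x - vstar A v x y)"
      by (rule alg)
    then show ?thesis using xn unfolding Dfun_def by simp
  qed
qed

end
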